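(* Let $n\ge1$, $m=2n-1$ and $0\le\alpha\le n-1$. An element $s\in R_\alpha^{\langle\tau\rangle}\setminus\{\pm1\}$ lies in $Q_\alpha$ if and only if either (a) $\alpha\ge\lfloor n/2\rfloor$, $s\not\equiv\pm1\bmod u$, and $s^2-1\bmod u$ is a square in $k^\times$; or (b) $s\equiv\varepsilon\bmod u$ with $\varepsilon\in\{\pm1\}$, $s=\varepsilon+t^js_0+O(t^{j+1})$ with $s_0\in k^\times$ and $\max\{1,n-(2\alpha+1)\}\le j\le n-\alpha-1$, and $\varepsilon(-1)^j2s_0$ is a square in $k^\times$. Moreover, with $\mathrm{pr}_\alpha:R_\alpha^{\langle\tau\rangle}=k[t]/(t^{n-\alpha})\to k[t]/(t^{n-\alpha-1})$ the reduction map: (i) if $0\le\alpha\le n-2$, the preimage of $1$ (resp. of $-1$) under $\mathrm{pr}_\alpha|_{Q_\alpha}$ has exactly $(q-1)/2$ elements; (ii) if $0\le\alpha\le n-2$ and $s_0\in R_\alpha^{\langle\tau\rangle,\prime}$ with $\mathrm{pr}_\alpha(s_0)\ne\pm1$, then $\mathrm{pr}_\alpha^{-1}(\mathrm{pr}_\alpha(s_0))$ has $q$ elements, and $s_0\in Q_\alpha$ if and only if $\mathrm{pr}_\alpha^{-1}(\mathrm{pr}_\alpha(s_0))\subseteq Q_\alpha$; (iii) $\#Q_{n-1}=(q-3)/2$.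
   Context: $k=\mathbb F_q$, $q$ odd, $t=u^2$. For $0\le\alpha<n$ and $m=2n-1$ let $R_\alpha=k[u]/(u^{m-2\alpha})$ with $\tau$ acting by $u\mapsto-u$, $R_\alpha^{\langle\tau\rangle}=k[t]/(t^{n-\alpha})$ its invariants, $R_\alpha^{\langle\tau\rangle,\prime}=\{s\in R_\alpha^{\langle\tau\rangle}: s\equiv\pm1\bmod u^{m+1-2(2\alpha+1)}\}$ (no condition if the exponent is $\le0$), $N_{\tau,\alpha}:R_\alpha\to R_\alpha^{\langle\tau\rangle}$, $s\mapsto s\tau(s)$, and $Q_\alpha=\{s\in R_\alpha^{\langle\tau\rangle,\prime}: s\tau(s)-1\in N_{\tau,\alpha}(R_\alpha)\}\setminus\{\pm1\}$. *)

theory Defs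
  imports "HOL-Computational_Algebra.Polynomial" "HOL-Library.Cardinality"
begin

text \<open>Elements of k[u]/(u^N) are represented by polynomials in u with all
coefficients of index \<ge> N equal to zero; t = u^2.\<close>

definition trunc_u :: "nat \<Rightarrow> 'a::comm_ring_1 poly \<Rightarrow> 'a poly" where
  "trunc_u N p = (\<Sum>i<N. monom (coeff p i) i)"

definition tau :: "'a::comm_ring_1 poly \<Rightarrow> 'a poly" where
  "tau p = pcompose p [:0, -1:]"

definition R_len :: "nat \<Rightarrow> nat \<Rightarrow> nat" where
  "R_len n \<alpha> = (2*n - 1) - 2*\<alpha>"

definition R_alpha :: "nat \<Rightarrow> nat \<Rightarrow> 'a::comm_ring_1 poly set" where
  "R_alpha n \<alpha> = {p. \<forall>i\<ge>R_len n \<alpha>. coeff p i = 0}"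

definition R_inv :: "nat \<Rightarrow> nat \<Rightarrow> 'a::comm_ring_1 poly set" where
  "R_inv n \<alpha> = {s \<in> R_alpha n \<alpha>. tau s = s}"

definition congr_u :: "nat \<Rightarrow> 'a::comm_ring_1 poly \<Rightarrow> 'a poly \<Rightarrow> bool" where
  "congr_u E p q \<longleftrightarrow> (\<forall>i<E. coeff p i = coeff q i)"

text \<open>exponent m + 1 - 2(2 alpha + 1), truncated at 0 (no condition if \<le> 0)\<close>
definition R_inv' :: "nat \<Rightarrow> nat \<Rightarrow> 'a::comm_ring_1 poly set" where
  "R_inv' n \<alpha> = {s \<in> R_inv n \<alpha>.
     congr_u ((2*n - 1) + 1 - 2*(2*\<alpha>+1)) s 1 \<or> congr_u ((2*n - 1) + 1 - 2*(2*\<alpha>+1)) s (-1)}"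

definition N_tau :: "nat \<Rightarrow> nat \<Rightarrow> 'a::comm_ring_1 poly \<Rightarrow> 'a poly" where
  "N_tau n \<alpha> s = trunc_u (R_len n \<alpha>) (s * tau s)"

definition Q :: "nat \<Rightarrow> nat \<Rightarrow> 'a::comm_ring_1 poly set" where
  "Q n \<alpha> = {s \<in> R_inv' n \<alpha>. N_tau n \<alpha> s - 1 \<in> N_tau n \<alpha> ` R_alpha n \<alpha>} - {1, -1}"

text \<open>reduction k[t]/(t^(n-alpha)) \<rightarrow> k[t]/(t^(n-alpha-1)), i.e. modulo u^(2(n-alpha-1))\<close>
definition pr_alpha :: "nat \<Rightarrow> nat \<Rightarrow> 'a::comm_ring_1 poly \<Rightarrow> 'a poly" where
  "pr_alpha n \<alpha> s = trunc_u (2*(n - \<alpha> - 1)) s"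

definition is_nz_square :: "'a::comm_ring_1 \<Rightarrow> bool" where
  "is_nz_square c \<longleftrightarrow> (\<exists>x. x \<noteq> 0 \<and> x^2 = c)"

end

theory Submission
  imports Defs
begin


lemma coeff_trunc: "coeff (trunc_u N p) i = (if i < N then coeff p i else 0)"
  unfolding trunc_u_def by (simp add: coeff_sum coeff_monom)

lemma coeff_tau: "coeff (tau p) i = (-1)^i * coeff p i"
  unfolding tau_def using coeff_pcompose_linear[of p "-1"] by simp

lemma of_nat_CARD0: "of_nat (CARD('a::{finite,ring_1})) = (0::'a)"
proof -
  have inj: "inj (\<lambda>x::'a. x + 1)" by (simp add: inj_on_def)
  have surj: "range (\<lambda>x::'a. x + 1) = UNIV"
    by (metis UNIV_eq_I diff_add_cancel rangeI)
  have "(\<Sum>x\<in>UNIV. x + (1::'a)) = (\<Sum>x\<in>UNIV. x)"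
    using sum.reindex[OF inj, of id] surj by simp
  moreover have "(\<Sum>x\<in>UNIV. x + (1::'a)) = (\<Sum>x\<in>UNIV. x) + of_nat CARD('a)"
    by (simp add: sum.distrib)
  ultimately show ?thesis by simp
qed

lemma two_ne0:
  assumes "odd (CARD('a::{finite,field}))"
  shows "(2::'a) \<noteq> 0"
proof
  assume h: "(2::'a) = 0"
  obtain k where k: "CARD('a) = 2*k+1" using assms oddE by blast
  have "of_nat (CARD('a)) = (of_nat k * 2 + 1 :: 'a)" by (simp add: k algebra_simps)
  also have "\<dots> = 1" using h by simp
  finally show False using of_nat_CARD0[where 'a='a] by simp
qed


definition evp :: "'a::comm_ring_1 poly \<Rightarrow> bool" where
  "evp p \<longleftrightarrow> (\<forall>i. odd i \<longrightarrow> coeff p i = 0)"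

lemma tau_fix:
  assumes "(2::'a::field) \<noteq> 0"
  shows "tau (p::'a poly) = p \<longleftrightarrow> evp p"
proof
  assume h: "tau p = p"
  show "evp p" unfolding evp_def
  proof (intro allI impI)
    fix i :: nat assume "odd i"
    have "coeff (tau p) i = coeff p i" using h by simp
    hence "- coeff p i = coeff p i" using \<open>odd i\<close> by (simp add: coeff_tau)
    hence "coeff p i + coeff p i = 0" by (simp only: neg_eq_iff_add_eq_0)
    hence "2 * coeff p i = 0" by (metis mult_2)
    thus "coeff p i = 0" using assms by simp
  qed
next
  assume "evp p"
  show "tau p = p" unfolding poly_eq_iff
  proof
    fix i show "coeff (tau p) i = coeff p i"
      using \<open>evp p\<close> by (cases "even i") (auto simp: coeff_tau evp_def)
  qed
qed

lemma evp_mult: "evp p \<Longrightarrow> evp q \<Longrightarrow> evp (p*q)"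
  unfolding evp_def coeff_mult
proof (intro allI impI)
  fix i :: nat assume *: "\<forall>i. odd i \<longrightarrow> coeff p i = 0" "\<forall>i. odd i \<longrightarrow> coeff q i = 0" "odd i"
  show "(\<Sum>j\<le>i. coeff p j * coeff q (i - j)) = 0"
  proof (rule sum.neutral, intro ballI)
    fix j assume "j \<in> {..i}"
    hence "odd j \<or> odd (i - j)" using *(3) by auto
    thus "coeff p j * coeff q (i - j) = 0" using *(1,2) by (metis mult_zero_left mult_zero_right)
  qed
qed

lemma evp_1: "evp 1" by (auto simp: evp_def coeff_1 elim!: oddE)
lemma evp_minus: "evp p \<Longrightarrow> evp q \<Longrightarrow> evp (p - q)" by (simp add: evp_def)
lemma evp_add: "evp p \<Longrightarrow> evp q \<Longrightarrow> evp (p + q)" by (simp add: evp_def)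
lemma evp_smult: "evp p \<Longrightarrow> evp (smult c p)" by (simp add: evp_def)
lemma evp_const: "evp [:c:]" by (simp add: evp_def coeff_pCons split: nat.splits)

lemma congr_mult:
  assumes "congr_u M p p'" "congr_u M q q'"
  shows "congr_u M (p*q) (p'*q')"
  unfolding congr_u_def
proof (intro allI impI)
  fix i assume "i < M"
  show "coeff (p*q) i = coeff (p'*q') i"
    unfolding coeff_mult
  proof (rule sum.cong[OF refl])
    fix j assume "j \<in> {..i}"
    hence "j < M" "i - j < M" using \<open>i<M\<close> by auto
    thus "coeff p j * coeff q (i - j) = coeff p' j * coeff q' (i - j)"
      using assms unfolding congr_u_def by simp
  qed
qed


lemma low_mult:
  fixes p q :: "'a::comm_ring_1 poly"
  assumes "\<forall>i<a. coeff p i = 0" "\<forall>i<b. coeff q i = 0"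
  shows "(\<forall>i<a+b. coeff (p*q) i = 0) \<and> coeff (p*q) (a+b) = coeff p a * coeff q b"
proof -
  obtain p' where p: "p = monom 1 a * p'" using assms(1) monom_1_dvd_iff' by (metis dvdE)
  obtain q' where q: "q = monom 1 b * q'" using assms(2) monom_1_dvd_iff' by (metis dvdE)
  have m: "monom 1 (a+b) = monom 1 a * (monom (1::'a) b)" by (simp add: mult_monom)
  have "p * q = monom 1 (a+b) * (p' * q')" unfolding m p q by (simp only: ac_simps)
  hence e: "coeff (p*q) = coeff (monom 1 (a+b) * (p' * q'))" by simp
  show ?thesis unfolding e by (simp add: coeff_monom_mult p coeff_mult_0 q)
qed



lemma hensel:
  fixes f :: "'a::field poly"
  assumes two: "(2::'a) \<noteq> 0" and ev: "evp f" and f0: "coeff f 0 = a^2" and a: "a \<noteq> 0"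
  shows "\<exists>w. evp w \<and> coeff w 0 = a \<and> (\<forall>i<2*M. coeff (w*w) i = coeff f i)"
proof (induction M)
  case 0
  show ?case by (intro exI[of _ "[:a:]"]) (simp add: evp_const)
next
  case (Suc M)
  then obtain w where w: "evp w" "coeff w 0 = a" "\<forall>i<2*M. coeff (w*w) i = coeff f i" by blast
  show ?case
  proof (cases "M = 0")
    case True
    have "\<forall>i<2. coeff ([:a:]*[:a:]) i = coeff f i"
    proof (intro allI impI)
      fix i :: nat assume "i < 2"
      hence "i = 0 \<or> i = 1" by auto
      thus "coeff ([:a:]*[:a:]) i = coeff f i"
        using f0 ev by (auto simp: power2_eq_square evp_def)
    qed
    thus ?thesis using True by (intro exI[of _ "[:a:]"]) (simp add: evp_const)
  next
    case False
    define e where "e = (coeff f (2*M) - coeff (w*w) (2*M)) / (2*a)"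
    define w' where "w' = w + monom e (2*M)"
    have mm: "monom e (2*M) * monom e (2*M) = monom (e*e) (2*M+2*M)" by (simp add: mult_monom)
    have sq: "w'*w' = w*w + (monom e (2*M) * w + monom e (2*M) * w) + monom (e*e) (2*M+2*M)"
      unfolding w'_def mm[symmetric] by (simp add: algebra_simps)
    have evw: "evp (w*w)" using evp_mult[OF w(1) w(1)] .
    show ?thesis
    proof (intro exI[of _ w'] conjI allI impI)
      show "evp w'" unfolding w'_def using w(1) by (auto simp: evp_def coeff_monom)
      show "coeff w' 0 = a" unfolding w'_def using w(2) False by simp
      fix i assume i: "i < 2 * Suc M"
      have hsq: "coeff (w'*w') i = coeff (w*w) i + ((if i < 2*M then 0 else e * coeff w (i - 2*M)) + (if i < 2*M then 0 else e * coeff w (i - 2*M))) + (if 2*M+2*M = i then e*e else 0)"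
        by (simp only: sq coeff_add coeff_monom_mult coeff_monom)
      have "i < 2*M \<or> i = 2*M \<or> i = 2*M+1" using i by presburger
      then consider "i < 2*M" | "i = 2*M" | "i = 2*M+1" by blast
      thus "coeff (w'*w') i = coeff f i"
      proof cases
        case 1
        thus ?thesis unfolding hsq using w(3) by simp
      next
        case 2
        have "coeff (w'*w') i = coeff (w*w) (2*M) + (e*a + e*a)"
          using hsq 2 False w(2) by simp
        also have "e*a + e*a = coeff f (2*M) - coeff (w*w) (2*M)"
        proof -
          have "2*a \<noteq> 0" using two a by simp
          hence "e * (2*a) = coeff f (2*M) - coeff (w*w) (2*M)" unfolding e_def by simp
          moreover have "e*a + e*a = e*(2*a)" by (simp only: mult_2 distrib_left)
          ultimately show ?thesis by simp
        qed
        finally show ?thesis using 2 by simp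
      next
        case 3
        have "coeff (w*w) i = 0" "coeff w 1 = 0" "coeff f i = 0"
          using evw w(1) ev 3 by (auto simp: evp_def)
        moreover have "2*M+2*M \<noteq> i" using 3 by presburger
        ultimately show ?thesis unfolding hsq using 3 by simp
      qed
    qed
  qed
qed

lemma norm_low:
  fixes x :: "'a::field poly"
  assumes "\<forall>i<2*j. coeff (x * tau x) i = 0" "coeff (x * tau x) (2*j) \<noteq> 0"
  shows "coeff (x * tau x) (2*j) = (-1)^j * (coeff x j)^2"
proof -
  have "x \<noteq> 0" using assms(2) by auto
  then obtain k where k: "coeff x k \<noteq> 0" using poly_eq_iff by (metis coeff_0)
  define v where "v = (LEAST k. coeff x k \<noteq> 0)"
  have xv: "coeff x v \<noteq> 0" unfolding v_def using k by (rule LeastI)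
  have low: "\<forall>i<v. coeff x i = 0" unfolding v_def using not_less_Least by blast
  have lowt: "\<forall>i<v. coeff (tau x) i = 0" using low by (simp add: coeff_tau)
  note lm = low_mult[OF low lowt]
  have cv: "coeff (x * tau x) (v+v) = (-1)^v * (coeff x v)^2"
    using lm by (simp add: coeff_tau power2_eq_square ac_simps)
  have nz: "coeff (x * tau x) (v+v) \<noteq> 0" unfolding cv using xv by simp
  have "v = j"
  proof (rule ccontr)
    assume "v \<noteq> j"
    hence "v < j \<or> j < v" by auto
    thus False
    proof
      assume "v < j" hence "v+v < 2*j" by simp
      thus False using assms(1) nz by blast
    next
      assume "j < v" hence "2*j < v+v" by simp
      thus False using lm assms(2) by blast
    qed
  qed
  thus ?thesis using cv by (simp add: mult_2)
qed



lemma coeff_tau_mono: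
  fixes w :: "'a::comm_ring_1 poly"
  assumes "evp w"
  shows "tau (monom 1 j * w) = smult ((-1)^j) (monom 1 j * w)"
  unfolding poly_eq_iff
proof
  fix i
  show "coeff (tau (monom 1 j * w)) i = coeff (smult ((-1)^j) (monom 1 j * w)) i"
  proof (cases "i < j")
    case True thus ?thesis by (simp add: coeff_tau coeff_monom_mult)
  next
    case False
    then obtain d where d: "i = j + d" by (metis le_add_diff_inverse not_less)
    show ?thesis
    proof (cases "even d")
      case True
      hence "(-1::'a)^i = (-1)^j" unfolding d power_add by simp
      thus ?thesis using False by (simp add: coeff_tau coeff_monom_mult)
    next
      case False
      hence "coeff w d = 0" using assms by (simp add: evp_def)
      thus ?thesis using d by (simp add: coeff_tau coeff_monom_mult)
    qed
  qed
qed

lemma norm_val: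
  fixes f :: "'a::field poly"
  assumes two: "(2::'a) \<noteq> 0" and ev: "evp f" and low: "\<forall>i<2*j. coeff f i = 0"
    and nz: "coeff f (2*j) \<noteq> 0" and jL: "2*j < L"
  shows "(\<exists>x. congr_u L (x * tau x) f) \<longleftrightarrow> is_nz_square ((-1)^j * coeff f (2*j))"
proof
  assume "\<exists>x. congr_u L (x * tau x) f"
  then obtain x where x: "congr_u L (x * tau x) f" by blast
  have l: "\<forall>i<2*j. coeff (x * tau x) i = 0" using x low jL unfolding congr_u_def by simp
  have c: "coeff (x * tau x) (2*j) = coeff f (2*j)" using x jL unfolding congr_u_def by simp
  have "coeff f (2*j) = (-1)^j * (coeff x j)^2" using norm_low[OF l] c nz by simp
  hence e: "(-1)^j * coeff f (2*j) = (coeff x j)^2"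
    by (simp flip: power_mult_distrib mult.assoc)
  hence "coeff x j \<noteq> 0" using nz by auto
  thus "is_nz_square ((-1)^j * coeff f (2*j))" unfolding is_nz_square_def using e by metis
next
  assume "is_nz_square ((-1)^j * coeff f (2*j))"
  then obtain b where b: "b \<noteq> 0" "b^2 = (-1)^j * coeff f (2*j)" unfolding is_nz_square_def by blast
  obtain f' where f': "f = monom 1 (2*j) * f'" using low monom_1_dvd_iff' by (metis dvdE)
  have cf': "coeff f' i = coeff f (2*j + i)" for i unfolding f' by (simp add: coeff_monom_mult)
  define F where "F = smult ((-1)^j) f'"
  have evF: "evp F" using ev unfolding F_def evp_def by (auto simp: cf')
  have F0: "coeff F 0 = b^2" unfolding F_def using b cf'[of 0] by simp
  obtain w where w: "evp w" "\<forall>i<2*L. coeff (w*w) i = coeff F i"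
    using hensel[OF two evF F0 b(1), of L] by blast
  define x where "x = monom 1 j * w"
  have mm: "monom (1::'a) j * monom 1 j = monom 1 (2*j)" by (simp add: mult_monom mult_2)
  have xt: "x * tau x = smult ((-1)^j) (monom 1 (2*j) * (w*w))"
    unfolding x_def coeff_tau_mono[OF w(1)] mm[symmetric] by (simp add: ac_simps)
  have "congr_u L (x * tau x) f"
    unfolding congr_u_def
  proof (intro allI impI)
    fix i assume iL: "i < L"
    show "coeff (x * tau x) i = coeff f i"
    proof (cases "i < 2*j")
      case True thus ?thesis unfolding xt f' by (simp add: coeff_monom_mult)
    next
      case False
      hence "i - 2*j < 2*L" using iL by linarith
      hence "coeff (w*w) (i - 2*j) = (-1)^j * coeff f' (i - 2*j)" using w(2) unfolding F_def by simp
      moreover have "(-1::'a)^j * (-1)^j = 1" by (simp flip: power_add)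
      moreover have "coeff (x * tau x) i = (-1)^j * coeff (w*w) (i - 2*j)"
        unfolding xt coeff_smult coeff_monom_mult using False by simp
      moreover have "coeff f i = coeff f' (i - 2*j)"
        unfolding f' coeff_monom_mult using False by simp
      ultimately show ?thesis by (simp add: mult.assoc[symmetric])
    qed
  qed
  thus "\<exists>x. congr_u L (x * tau x) f" by blast
qed



lemma normcond:
  fixes s :: "'a::comm_ring_1 poly"
  assumes ts: "tau s = s" and L1: "R_len n \<alpha> \<ge> 1"
  shows "(N_tau n \<alpha> s - 1 \<in> N_tau n \<alpha> ` R_alpha n \<alpha>) \<longleftrightarrow> (\<exists>x. congr_u (R_len n \<alpha>) (x * tau x) (s*s - 1))"
proof
  assume "N_tau n \<alpha> s - 1 \<in> N_tau n \<alpha> ` R_alpha n \<alpha>"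
  then obtain x where x: "N_tau n \<alpha> s - 1 = N_tau n \<alpha> x" by blast
  have "congr_u (R_len n \<alpha>) (x * tau x) (s*s - 1)"
    unfolding congr_u_def
  proof (intro allI impI)
    fix i assume i: "i < R_len n \<alpha>"
    have "coeff (N_tau n \<alpha> s - 1) i = coeff (N_tau n \<alpha> x) i" using x by simp
    thus "coeff (x * tau x) i = coeff (s * s - 1) i"
      using i ts by (simp add: N_tau_def coeff_trunc)
  qed
  thus "\<exists>x. congr_u (R_len n \<alpha>) (x * tau x) (s*s - 1)" by blast
next
  assume "\<exists>x. congr_u (R_len n \<alpha>) (x * tau x) (s*s - 1)"
  then obtain x where x: "congr_u (R_len n \<alpha>) (x * tau x) (s*s - 1)" by blast
  define x' where "x' = trunc_u (R_len n \<alpha>) x"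
  have x'R: "x' \<in> R_alpha n \<alpha>" unfolding x'_def R_alpha_def by (simp add: coeff_trunc)
  have c1: "congr_u (R_len n \<alpha>) x' x" unfolding x'_def congr_u_def by (simp add: coeff_trunc)
  have c2: "congr_u (R_len n \<alpha>) (tau x') (tau x)" unfolding x'_def congr_u_def by (simp add: coeff_trunc coeff_tau)
  have c3: "congr_u (R_len n \<alpha>) (x' * tau x') (x * tau x)" by (rule congr_mult[OF c1 c2])
  have "N_tau n \<alpha> x' = N_tau n \<alpha> s - 1"
    unfolding poly_eq_iff
  proof
    fix i
    show "coeff (N_tau n \<alpha> x') i = coeff (N_tau n \<alpha> s - 1) i"
    proof (cases "i < R_len n \<alpha>")
      case True
      thus ?thesis using c3 x ts unfolding congr_u_def by (simp add: N_tau_def coeff_trunc)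
    next
      case False
      hence "i \<noteq> 0" using L1 by linarith
      thus ?thesis using False by (simp add: N_tau_def coeff_trunc coeff_1)
    qed
  qed
  thus "N_tau n \<alpha> s - 1 \<in> N_tau n \<alpha> ` R_alpha n \<alpha>" using x'R by (metis image_eqI)
qed



lemma coeff_const_eps: "coeff [:e:] i = (if i = 0 then e else 0)"
  by (simp add: coeff_pCons split: nat.splits)

lemma char:
  fixes s :: "'a::field poly"
  assumes two: "(2::'a) \<noteq> 0" and an: "\<alpha> < n" and sR: "s \<in> R_inv n \<alpha>"
    and s1: "s \<noteq> 1" and sm1: "s \<noteq> -1"
  shows "s \<in> Q n \<alpha> \<longleftrightarrow>
              ((\<alpha> \<ge> n div 2 \<and> coeff s 0 \<noteq> 1 \<and> coeff s 0 \<noteq> -1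
                 \<and> is_nz_square ((coeff s 0)^2 - 1))
               \<or> (\<exists>\<epsilon>\<in>{1, -1}. \<exists>j s\<^sub>0. coeff s 0 = \<epsilon>
                    \<and> (\<forall>i. 0 < i \<and> i < j \<longrightarrow> coeff s (2*i) = 0)
                    \<and> coeff s (2*j) = s\<^sub>0 \<and> s\<^sub>0 \<noteq> 0
                    \<and> 1 \<le> j \<and> n - (2*\<alpha>+1) \<le> j \<and> j \<le> n - \<alpha> - 1
                    \<and> is_nz_square (\<epsilon> * (-1)^j * 2 * s\<^sub>0)))"
    (is "_ \<longleftrightarrow> (?A \<or> ?B)")
proof -
  define L where "L = R_len n \<alpha>"
  have Lv: "L = 2*(n-\<alpha>) - 1" unfolding L_def R_len_def using an by simp
  have L1: "R_len n \<alpha> \<ge> 1" using an unfolding R_len_def by simp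
  have ts: "tau s = s" using sR unfolding R_inv_def by simp
  have evs: "evp s" using ts tau_fix[OF two] by simp
  have sL: "\<forall>i\<ge>L. coeff s i = 0" using sR unfolding R_inv_def R_alpha_def L_def by simp
  define E where "E = (2*n - 1) + 1 - 2*(2*\<alpha>+1)"
  define f where "f = s*s - 1"
  have evf: "evp f" unfolding f_def by (intro evp_minus evp_mult evs evp_1)
  have Qiff: "s \<in> Q n \<alpha> \<longleftrightarrow> (congr_u E s 1 \<or> congr_u E s (-1)) \<and> (\<exists>x. congr_u L (x*tau x) f)"
    unfolding Q_def R_inv'_def E_def L_def f_def using sR s1 sm1 normcond[OF ts L1] by auto
  show ?thesis
  proof (cases "coeff s 0 = 1 \<or> coeff s 0 = -1")
    case False
    hence c0: "coeff s 0 \<noteq> 1" "coeff s 0 \<noteq> -1" by auto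
    have nB: "\<not> ?B" using c0 by auto
    have R': "(congr_u E s 1 \<or> congr_u E s (-1)) \<longleftrightarrow> E = 0"
    proof
      assume h: "congr_u E s 1 \<or> congr_u E s (-1)"
      show "E = 0"
      proof (rule ccontr)
        assume "E \<noteq> 0"
        thus False using h c0 unfolding congr_u_def by auto
      qed
    qed (simp add: congr_u_def)
    have Ee: "E = 2*n - (4*\<alpha>+2)" unfolding E_def using an by simp
    have nd: "n = 2*(n div 2) + n mod 2" "n mod 2 < 2" by simp_all
    have E0: "E = 0 \<longleftrightarrow> n div 2 \<le> \<alpha>" unfolding Ee using nd by linarith
    have f0: "coeff f 0 = (coeff s 0)^2 - 1" unfolding f_def by (simp add: coeff_mult_0 power2_eq_square)
    have f0nz: "coeff f 0 \<noteq> 0"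
    proof
      assume "coeff f 0 = 0"
      hence "(coeff s 0 - 1) * (coeff s 0 + 1) = 0" unfolding f0 by (simp add: algebra_simps power2_eq_square)
      thus False using c0 by (auto simp: add_eq_0_iff minus_equation_iff)
    qed
    have nv: "(\<exists>x. congr_u L (x*tau x) f) \<longleftrightarrow> is_nz_square ((-1)^0 * coeff f (2*0))"
      by (rule norm_val[OF two evf]) (use f0nz L1 in \<open>auto simp: L_def\<close>)
    show ?thesis unfolding Qiff R' E0 nv using nB c0 f0 by auto
  next
    case True
    then obtain \<epsilon> where eps: "\<epsilon> \<in> {1, -1}" "coeff s 0 = \<epsilon>" by auto
    have ee: "\<epsilon> * \<epsilon> = 1" using eps by auto
    have nA: "\<not> ?A" using eps by auto
    have "\<exists>i>0. coeff s i \<noteq> 0"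
    proof (rule ccontr)
      assume "\<not> (\<exists>i>0. coeff s i \<noteq> 0)"
      hence z: "\<forall>i>0. coeff s i = 0" by blast
      show False
      proof (cases "\<epsilon> = 1")
        case True
        have "s = 1" unfolding poly_eq_iff
        proof
          fix i show "coeff s i = coeff 1 i" by (cases "i = 0") (use z eps True in \<open>auto simp: coeff_1\<close>)
        qed
        thus False using s1 by simp
      next
        case False
        hence "\<epsilon> = -1" using eps by auto
        hence e1: "\<epsilon> = -1" .
        have "s = -1" unfolding poly_eq_iff
        proof
          fix i show "coeff s i = coeff (-1) i" by (cases "i = 0") (use z eps e1 in \<open>auto simp: coeff_1\<close>)
        qed
        thus False using sm1 by simp
      qed
    qed
    then obtain i0 where i0: "i0 > 0" "coeff s i0 \<noteq> 0" by blast
    have "even i0" using i0 evs unfolding evp_def by blast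
    hence ex: "0 < i0 div 2 \<and> coeff s (2 * (i0 div 2)) \<noteq> 0" using i0 by auto
    define j where "j = (LEAST j. 0 < j \<and> coeff s (2*j) \<noteq> 0)"
    have hj: "0 < j \<and> coeff s (2*j) \<noteq> 0" unfolding j_def using ex by (rule LeastI)
    have hmin: "\<forall>i. 0 < i \<and> i < j \<longrightarrow> coeff s (2*i) = 0"
      unfolding j_def using not_less_Least by blast
    have jL: "2*j < L" using hj sL by (meson not_le)
    have lows: "\<forall>i<2*j. coeff s i = (if i = 0 then \<epsilon> else 0)"
    proof (intro allI impI)
      fix i assume i: "i < 2*j"
      show "coeff s i = (if i = 0 then \<epsilon> else 0)"
      proof (cases "i = 0")
        case True thus ?thesis using eps by simp
      next
        case False
        show ?thesis
        proof (cases "even i")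
          case True
          then obtain k where "i = 2*k" by blast
          thus ?thesis using hmin False i by auto
        next
          case False thus ?thesis using evs unfolding evp_def by auto
        qed
      qed
    qed
    have Biff: "?B \<longleftrightarrow> (n - (2*\<alpha>+1) \<le> j \<and> is_nz_square (\<epsilon> * (-1)^j * 2 * coeff s (2*j)))"
    proof
      assume ?B
      then obtain \<epsilon>' j' s0 where B: "\<epsilon>' \<in> {1,-1}" "coeff s 0 = \<epsilon>'"
        "\<forall>i. 0 < i \<and> i < j' \<longrightarrow> coeff s (2*i) = 0" "coeff s (2*j') = s0" "s0 \<noteq> 0"
        "1 \<le> j'" "n - (2*\<alpha>+1) \<le> j'" "is_nz_square (\<epsilon>' * (-1)^j' * 2 * s0)" by blast
      have "j \<le> j'" unfolding j_def using B by (intro Least_le) auto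
      moreover have "\<not> j < j'" using B(3) hj by auto
      ultimately have "j' = j" by simp
      thus "n - (2*\<alpha>+1) \<le> j \<and> is_nz_square (\<epsilon> * (-1)^j * 2 * coeff s (2*j))"
        using B eps by auto
    next
      assume h: "n - (2*\<alpha>+1) \<le> j \<and> is_nz_square (\<epsilon> * (-1)^j * 2 * coeff s (2*j))"
      have "j \<le> n - \<alpha> - 1" using jL Lv by linarith
      thus ?B using h hj hmin eps by (intro bexI[of _ \<epsilon>] exI[of _ j] exI[of _ "coeff s (2*j)"]) auto
    qed
    have R': "(congr_u E s 1 \<or> congr_u E s (-1)) \<longleftrightarrow> E \<le> 2*j"
    proof
      assume h: "congr_u E s 1 \<or> congr_u E s (-1)"
      show "E \<le> 2*j"
      proof (rule ccontr)
        assume "\<not> E \<le> 2*j"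
        hence "2*j < E" by simp
        thus False using h hj unfolding congr_u_def by (auto simp: coeff_1)
      qed
    next
      assume h: "E \<le> 2*j"
      show "congr_u E s 1 \<or> congr_u E s (-1)"
      proof (cases "\<epsilon> = 1")
        case True
        have "congr_u E s 1" unfolding congr_u_def using h lows True by (auto simp: coeff_1)
        thus ?thesis by simp
      next
        case False
        hence "\<epsilon> = -1" using eps by auto
        hence "congr_u E s (-1)" unfolding congr_u_def using h lows by (auto simp: coeff_1)
        thus ?thesis by simp
      qed
    qed
    have Ee: "E = 2*n - (4*\<alpha>+2)" unfolding E_def using an by simp
    have E2: "E \<le> 2*j \<longleftrightarrow> n - (2*\<alpha>+1) \<le> j" unfolding Ee by (simp split: nat_diff_split)
    define g where "g = s - [:\<epsilon>:]"
    define h where "h = s + [:\<epsilon>:]"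
    have fgh: "f = g * h"
    proof -
      have "g * h = s*s - [:\<epsilon>:]*[:\<epsilon>:]" unfolding g_def h_def by (simp add: algebra_simps)
      also have "[:\<epsilon>:]*[:\<epsilon>:] = (1::'a poly)" using ee by (simp add: one_pCons)
      finally show ?thesis unfolding f_def by simp
    qed
    have lowg: "\<forall>i<2*j. coeff g i = 0" unfolding g_def using lows by (simp add: coeff_const_eps)
    have g2j: "coeff g (2*j) = coeff s (2*j)" unfolding g_def using hj by (simp add: coeff_const_eps)
    have h0: "coeff h 0 = \<epsilon> + \<epsilon>" unfolding h_def using eps by simp
    have lm: "(\<forall>i<2*j+0. coeff (g*h) i = 0) \<and> coeff (g*h) (2*j+0) = coeff g (2*j) * coeff h 0"
      by (rule low_mult) (use lowg in auto)
    have lowf: "\<forall>i<2*j. coeff f i = 0" using lm fgh by simp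
    have f2j: "coeff f (2*j) = coeff s (2*j) * (\<epsilon> + \<epsilon>)" using lm fgh g2j h0 by simp
    have epsnz: "\<epsilon> + \<epsilon> \<noteq> 0" using eps two by auto
    have f2jnz: "coeff f (2*j) \<noteq> 0" unfolding f2j using hj epsnz by simp
    have nv: "(\<exists>x. congr_u L (x*tau x) f) \<longleftrightarrow> is_nz_square ((-1)^j * coeff f (2*j))"
      by (rule norm_val[OF two evf lowf f2jnz jL])
    have arg: "(-1)^j * coeff f (2*j) = \<epsilon> * (-1)^j * 2 * coeff s (2*j)"
      unfolding f2j mult_2_right by (simp only: distrib_left distrib_right ac_simps)
    show ?thesis unfolding Qiff R' E2 nv Biff arg using nA by auto
  qed
qed



lemma two_to_one:
  assumes "finite A" "f ` A = B" "\<forall>b\<in>B. card {a\<in>A. f a = b} = 2"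
  shows "card A = 2 * card B"
proof -
  have A: "A = (\<Union>b\<in>B. {a\<in>A. f a = b})" using assms(2) by auto
  have fB: "finite B" using assms(1,2) by auto
  have "card (\<Union>b\<in>B. {a\<in>A. f a = b}) = (\<Sum>b\<in>B. card {a\<in>A. f a = b})"
    by (rule card_UN_disjoint) (use assms(1) fB in auto)
  also have "\<dots> = (\<Sum>b\<in>B. 2)" using assms(3) by simp
  finally show ?thesis using A by simp
qed

lemma card_sq:
  fixes k :: "'a::{finite,field}"
  assumes two: "(2::'a) \<noteq> 0" and k: "k \<noteq> 0"
  shows "card {c. is_nz_square (k*c)} = (CARD('a) - 1) div 2"
proof -
  define A where "A = UNIV - {0::'a}"
  define B where "B = {c. is_nz_square (k*c)}"
  define f where "f = (\<lambda>x::'a. x^2 / k)"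
  have img: "f ` A = B"
  proof
    show "f ` A \<subseteq> B" unfolding A_def B_def f_def is_nz_square_def using k by auto
    show "B \<subseteq> f ` A"
    proof
      fix c assume "c \<in> B"
      then obtain y where y: "y \<noteq> 0" "y^2 = k*c" unfolding B_def is_nz_square_def by blast
      have "c = f y" unfolding f_def using y k by simp
      thus "c \<in> f ` A" using y unfolding A_def by blast
    qed
  qed
  have fib: "\<forall>b\<in>B. card {a\<in>A. f a = b} = 2"
  proof
    fix b assume "b \<in> B"
    then obtain y where y: "y \<noteq> 0" "y^2 = k*b" unfolding B_def is_nz_square_def by blast
    have "{a\<in>A. f a = b} = {y, -y}"
    proof (rule set_eqI)
      fix x
      have "f x = b \<longleftrightarrow> x^2 = y^2" unfolding f_def using y k by (auto simp: field_simps)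
      also have "\<dots> \<longleftrightarrow> x = y \<or> x = -y" by (rule power2_eq_iff)
      finally show "x \<in> {a\<in>A. f a = b} \<longleftrightarrow> x \<in> {y, -y}" unfolding A_def using y by auto
    qed
    moreover have "y \<noteq> -y" using y two by (metis add_eq_0_iff mult_2 mult_eq_0_iff)
    ultimately show "card {a\<in>A. f a = b} = 2" by simp
  qed
  have "card A = 2 * card B" by (rule two_to_one[OF _ img fib]) simp
  moreover have "card A = CARD('a) - 1" unfolding A_def by (simp add: card_Diff_singleton)
  ultimately show ?thesis unfolding B_def by simp
qed

lemma card_conic:
  fixes dummy :: "'a::{finite,field}"
  assumes two: "(2::'a) \<noteq> 0"
  shows "card {c::'a. is_nz_square (c^2 - 1)} = (CARD('a) - 3) div 2"
proof -
  define A where "A = UNIV - {0::'a, 1, -1}"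
  define B where "B = {c::'a. is_nz_square (c^2 - 1)}"
  define f where "f = (\<lambda>p::'a. (p + inverse p) / 2)"
  have keyA: "p \<in> A \<longleftrightarrow> p \<noteq> 0 \<and> p*p \<noteq> 1" for p
  proof -
    have "p*p = 1 \<longleftrightarrow> p = 1 \<or> p = -1" using power2_eq_iff[of p 1] by (simp add: power2_eq_square)
    thus ?thesis unfolding A_def by auto
  qed
  have four: "(4::'a) \<noteq> 0"
  proof -
    have "(4::'a) = 2 * 2" by simp
    thus ?thesis using two by (simp only: mult_eq_0_iff) simp
  qed
  have id1: "(f p)^2 - 1 = ((p - inverse p)/2)^2" if "p \<noteq> 0" for p
    unfolding f_def using that two four by (simp add: field_simps power2_eq_square)
  have img: "f ` A = B"
  proof
    show "f ` A \<subseteq> B"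
    proof
      fix c assume "c \<in> f ` A"
      then obtain p where p: "p \<in> A" "c = f p" by blast
      have p0: "p \<noteq> 0" "p*p \<noteq> 1" using p keyA by auto
      have "p - inverse p \<noteq> 0"
      proof
        assume "p - inverse p = 0"
        hence "p * p = inverse p * p" by simp
        thus False using p0 by simp
      qed
      hence "(p - inverse p)/2 \<noteq> 0" using two by simp
      moreover have "c^2 - 1 = ((p - inverse p)/2)^2" using id1[OF p0(1)] p(2) by simp
      ultimately show "c \<in> B" unfolding B_def is_nz_square_def by (intro CollectI exI[of _ "(p - inverse p)/2"]) simp
    qed
  next
    show "B \<subseteq> f ` A"
    proof
      fix c assume "c \<in> B"
      then obtain y where y: "y \<noteq> 0" "y^2 = c^2 - 1" unfolding B_def is_nz_square_def by blast
      define p where "p = c - y"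
      have pq: "p * (c + y) = 1" unfolding p_def using y(2) by (simp add: algebra_simps power2_eq_square)
      hence p0: "p \<noteq> 0" by auto
      have ip: "inverse p = c + y" using pq p0 by (simp add: field_simps)
      have "p * p \<noteq> 1"
      proof
        assume "p*p = 1"
        hence "p * p = p * (c + y)" using pq by simp
        hence "p = c + y" using p0 by simp
        hence "y + y = 0" unfolding p_def by (simp add: algebra_simps)
        hence "2 * y = 0" by (simp only: mult_2)
        thus False using y(1) two by simp
      qed
      hence "p \<in> A" using keyA p0 by simp
      moreover have "f p = (p + (c + y))/2" unfolding f_def by (simp only: ip)
      moreover have "(p + (c + y))/2 = c" unfolding p_def using two by (simp add: field_simps)
      ultimately show "c \<in> f ` A" by (metis image_eqI)
    qed
  qed
  have fib: "\<forall>b\<in>B. card {a\<in>A. f a = b} = 2"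
  proof
    fix b assume "b \<in> B"
    then obtain p0 where p0: "p0 \<in> A" "f p0 = b" using img by blast
    have q0: "p0 \<noteq> 0" "p0*p0 \<noteq> 1" using p0 keyA by auto
    have "{a\<in>A. f a = b} = {p0, inverse p0}"
    proof (rule set_eqI)
      fix p
      show "p \<in> {a\<in>A. f a = b} \<longleftrightarrow> p \<in> {p0, inverse p0}"
      proof
        assume "p \<in> {a\<in>A. f a = b}"
        hence p: "p \<in> A" "f p = f p0" using p0 by auto
        have pp: "p \<noteq> 0" using p keyA by auto
        have "(p + inverse p)/2 = (p0 + inverse p0)/2" using p(2) unfolding f_def .
        hence "p + inverse p = p0 + inverse p0" using two by (simp only: divide_cancel_right) simp
        hence "(p + inverse p) * (p * p0) = (p0 + inverse p0) * (p * p0)" by simp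
        hence "p*p*p0 + p0 = p0*p0*p + p" using pp q0 by (simp add: algebra_simps)
        hence "(p - p0) * (p*p0 - 1) = 0" by (simp add: algebra_simps)
        hence "p = p0 \<or> p * p0 = 1" by auto
        thus "p \<in> {p0, inverse p0}" using q0 by (auto simp: field_simps)
      next
        assume "p \<in> {p0, inverse p0}"
        moreover have "inverse p0 \<in> A" using q0 keyA by (simp add: field_simps)
        moreover have "f (inverse p0) = f p0" unfolding f_def using q0 by (simp add: add.commute)
        ultimately show "p \<in> {a\<in>A. f a = b}" using p0 by auto
      qed
    qed
    moreover have "p0 \<noteq> inverse p0"
    proof
      assume "p0 = inverse p0"
      hence "p0 * p0 = 1" using q0 by (metis right_inverse)
      thus False using q0 by simp
    qed
    ultimately show "card {a\<in>A. f a = b} = 2" by simp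
  qed
  have "card A = 2 * card B" by (rule two_to_one[OF _ img fib]) simp
  moreover have "card A = CARD('a) - 3"
  proof -
    have d: "(0::'a) \<noteq> 1" "(0::'a) \<noteq> -1" "(1::'a) \<noteq> -1"
      using two by (auto simp: minus_equation_iff)
    have "card {0::'a, 1, -1} = 3" using d by simp
    thus ?thesis unfolding A_def by (simp add: card_Diff_subset)
  qed
  ultimately show ?thesis unfolding B_def by simp
qed



lemma Q_sub: "Q n \<alpha> \<subseteq> R_inv n \<alpha>" unfolding Q_def R_inv'_def by auto

lemma coeff_pr: "coeff (pr_alpha n \<alpha> s) i = (if i < 2*(n-\<alpha>-1) then coeff s i else 0)"
  unfolding pr_alpha_def by (simp add: coeff_trunc)

lemma R_inv_iff:
  assumes two: "(2::'a::field) \<noteq> 0"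
  shows "(s::'a poly) \<in> R_inv n \<alpha> \<longleftrightarrow> (\<forall>i\<ge>R_len n \<alpha>. coeff s i = 0) \<and> evp s"
  unfolding R_inv_def R_alpha_def using tau_fix[OF two] by auto

lemma part2_set:
  fixes \<epsilon> :: "'a::field"
  assumes two: "(2::'a) \<noteq> 0" and an: "\<alpha> + 2 \<le> n" and eps: "\<epsilon> \<in> {1,-1}"
  shows "{s \<in> Q n \<alpha>. pr_alpha n \<alpha> s = [:\<epsilon>:]} =
         (\<lambda>c. [:\<epsilon>:] + monom c (2*(n-\<alpha>-1))) ` {c. is_nz_square (\<epsilon>*(-1)^(n-\<alpha>-1)*2*c)}"
proof -
  define K where "K = 2*(n-\<alpha>-1)"
  have RL: "R_len n \<alpha> = K + 1" unfolding K_def R_len_def using an by simp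
  have K2: "K \<ge> 2" unfolding K_def using an by simp
  have an': "\<alpha> < n" using an by simp
  show ?thesis unfolding K_def[symmetric]
  proof
    show "{s \<in> Q n \<alpha>. pr_alpha n \<alpha> s = [:\<epsilon>:]} \<subseteq> (\<lambda>c. [:\<epsilon>:] + monom c K) ` {c. is_nz_square (\<epsilon>*(-1)^(n-\<alpha>-1)*2*c)}"
    proof
      fix s assume "s \<in> {s \<in> Q n \<alpha>. pr_alpha n \<alpha> s = [:\<epsilon>:]}"
      hence sQ: "s \<in> Q n \<alpha>" and ps: "pr_alpha n \<alpha> s = [:\<epsilon>:]" by auto
      have sR: "s \<in> R_inv n \<alpha>" using sQ Q_sub by blast
      have s1: "s \<noteq> 1" "s \<noteq> -1" using sQ unfolding Q_def by auto
      define c where "c = coeff s K"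
      have seq: "s = [:\<epsilon>:] + monom c K"
        unfolding poly_eq_iff
      proof
        fix i
        show "coeff s i = coeff ([:\<epsilon>:] + monom c K) i"
        proof (cases "i < K")
          case True
          have "coeff (pr_alpha n \<alpha> s) i = coeff [:\<epsilon>:] i" using ps by simp
          thus ?thesis using True unfolding coeff_pr K_def[symmetric] by (simp add: coeff_monom)
        next
          case False
          show ?thesis
          proof (cases "i = K")
            case True thus ?thesis using K2 unfolding c_def by (simp add: coeff_const_eps)
          next
            case False
            hence "i \<ge> R_len n \<alpha>" using \<open>\<not> i < K\<close> RL by simp
            hence "coeff s i = 0" using sR unfolding R_inv_def R_alpha_def by simp
            thus ?thesis using False \<open>\<not> i < K\<close> K2 by (simp add: coeff_const_eps coeff_monom)
          qed
        qed
      qed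
      have cs: "coeff s i = (if i = 0 then \<epsilon> else 0) + (if i = K then c else 0)" for i
        by (subst seq) (use K2 in \<open>simp add: coeff_const_eps coeff_monom\<close>)
      have s0: "coeff s 0 = \<epsilon>" using cs[of 0] K2 by simp
      from char[OF two an' sR s1] s0 eps
      obtain \<epsilon>' j s0 where B: "\<epsilon>' \<in> {1,-1}" "coeff s 0 = \<epsilon>'"
        "coeff s (2*j) = s0" "s0 \<noteq> 0" "1 \<le> j" "j \<le> n - \<alpha> - 1"
        "is_nz_square (\<epsilon>' * (-1)^j * 2 * s0)"
        using sQ by auto
      have "2*j = K"
      proof (rule ccontr)
        assume "2*j \<noteq> K"
        hence "coeff s (2*j) = 0" using cs[of "2*j"] B(5) by simp
        thus False using B(3,4) by simp
      qed
      hence j: "j = n-\<alpha>-1" unfolding K_def by simp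
      have "s0 = c" using B(3) \<open>2*j = K\<close> unfolding c_def by simp
      hence "is_nz_square (\<epsilon>*(-1)^(n-\<alpha>-1)*2*c)" using B(2,7) s0 j by simp
      thus "s \<in> (\<lambda>c. [:\<epsilon>:] + monom c K) ` {c. is_nz_square (\<epsilon>*(-1)^(n-\<alpha>-1)*2*c)}"
        using seq by blast
    qed
  next
    show "(\<lambda>c. [:\<epsilon>:] + monom c K) ` {c. is_nz_square (\<epsilon>*(-1)^(n-\<alpha>-1)*2*c)} \<subseteq> {s \<in> Q n \<alpha>. pr_alpha n \<alpha> s = [:\<epsilon>:]}"
    proof
      fix s assume "s \<in> (\<lambda>c. [:\<epsilon>:] + monom c K) ` {c. is_nz_square (\<epsilon>*(-1)^(n-\<alpha>-1)*2*c)}"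
      then obtain c where c: "is_nz_square (\<epsilon>*(-1)^(n-\<alpha>-1)*2*c)" and seq: "s = [:\<epsilon>:] + monom c K" by blast
      have c0: "c \<noteq> 0" using c unfolding is_nz_square_def by auto
      have cs: "coeff s i = (if i = 0 then \<epsilon> else 0) + (if i = K then c else 0)" for i
        by (subst seq) (use K2 in \<open>simp add: coeff_const_eps coeff_monom\<close>)
      have sR: "s \<in> R_inv n \<alpha>" unfolding R_inv_iff[OF two] evp_def
        using RL K2 by (auto simp: cs K_def)
      have sK: "coeff s K = c" using cs[of K] K2 by simp
      have s1: "s \<noteq> 1" "s \<noteq> -1" using sK c0 K2 by (auto simp: coeff_1)
      have ps: "pr_alpha n \<alpha> s = [:\<epsilon>:]"
        unfolding poly_eq_iff coeff_pr K_def[symmetric] using K2 by (auto simp: cs coeff_const_eps)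
      have "s \<in> Q n \<alpha>"
        unfolding char[OF two an' sR s1]
        apply (rule disjI2)
        apply (rule bexI[of _ \<epsilon>], rule exI[of _ "n-\<alpha>-1"], rule exI[of _ c])
        using eps c c0 an K2 by (auto simp: cs K_def)
      thus "s \<in> {s \<in> Q n \<alpha>. pr_alpha n \<alpha> s = [:\<epsilon>:]}" using ps by simp
    qed
  qed
qed

lemma part2_card:
  fixes \<epsilon> :: "'a::{finite,field}"
  assumes two: "(2::'a) \<noteq> 0" and an: "\<alpha> + 2 \<le> n" and eps: "\<epsilon> \<in> {1,-1}"
  shows "card {s \<in> (Q n \<alpha> :: 'a poly set). pr_alpha n \<alpha> s = [:\<epsilon>:]} = (CARD('a) - 1) div 2"
proof -
  have inj: "inj (\<lambda>c. [:\<epsilon>:] + monom c (2*(n-\<alpha>-1)))"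
  proof (rule injI)
    fix a b assume "[:\<epsilon>:] + monom a (2*(n-\<alpha>-1)) = [:\<epsilon>:] + monom b (2*(n-\<alpha>-1))"
    thus "a = b" by (simp add: monom_eq_iff)
  qed
  have k: "\<epsilon>*(-1)^(n-\<alpha>-1)*2 \<noteq> 0" using eps two by auto
  show ?thesis unfolding part2_set[OF two an eps]
    using card_image[OF inj_on_subset[OF inj subset_UNIV]] card_sq[OF two k] by simp
qed



lemma pc1: "(1::'a::comm_ring_1 poly) = [:1:]" "(-1::'a poly) = [:-1:]"
  by (auto simp: poly_eq_iff coeff_1 coeff_const_eps)

lemma pr_const: "n > \<alpha> + 1 \<Longrightarrow> pr_alpha n \<alpha> [:e:] = [:e:]"
  unfolding poly_eq_iff coeff_pr by (auto simp: coeff_const_eps)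

lemma part3:
  fixes s0 :: "'a::{finite,field} poly"
  assumes two: "(2::'a) \<noteq> 0" and an: "\<alpha> + 2 \<le> n" and s0R': "s0 \<in> R_inv' n \<alpha>"
    and pn: "pr_alpha n \<alpha> s0 \<notin> {1,-1}"
  shows "card {s \<in> R_inv n \<alpha>. pr_alpha n \<alpha> s = pr_alpha n \<alpha> s0} = CARD('a)
          \<and> (s0 \<in> Q n \<alpha> \<longleftrightarrow> {s \<in> R_inv n \<alpha>. pr_alpha n \<alpha> s = pr_alpha n \<alpha> s0} \<subseteq> Q n \<alpha>)"
proof -
  define K where "K = 2*(n-\<alpha>-1)"
  have RL: "R_len n \<alpha> = K + 1" unfolding K_def R_len_def using an by simp
  have K2: "K \<ge> 2" unfolding K_def using an by simp
  have an': "\<alpha> < n" using an by simp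
  have s0R: "s0 \<in> R_inv n \<alpha>" using s0R' unfolding R_inv'_def by simp
  have evs0: "evp s0" using s0R R_inv_iff[OF two] by blast
  define P where "P = pr_alpha n \<alpha> s0"
  have cP: "coeff P i = (if i < K then coeff s0 i else 0)" for i unfolding P_def coeff_pr K_def by simp
  define F where "F = {s \<in> R_inv n \<alpha>. pr_alpha n \<alpha> s = P}"
  have Fim: "F = (\<lambda>c. P + monom c K) ` UNIV"
  proof
    show "F \<subseteq> (\<lambda>c. P + monom c K) ` UNIV"
    proof
      fix s assume "s \<in> F"
      hence sR: "s \<in> R_inv n \<alpha>" and ps: "pr_alpha n \<alpha> s = P" unfolding F_def by auto
      have "s = P + monom (coeff s K) K"
        unfolding poly_eq_iff
      proof
        fix i
        have "coeff (pr_alpha n \<alpha> s) i = coeff P i" using ps by simp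
        hence lo: "i < K \<Longrightarrow> coeff s i = coeff P i" unfolding coeff_pr K_def[symmetric] by simp
        have hi: "i > K \<Longrightarrow> coeff s i = 0" using sR RL unfolding R_inv_def R_alpha_def by auto
        show "coeff s i = coeff (P + monom (coeff s K) K) i"
          using lo hi by (cases "i < K"; cases "i = K") (auto simp: cP coeff_monom)
      qed
      thus "s \<in> (\<lambda>c. P + monom c K) ` UNIV" by blast
    qed
  next
    show "(\<lambda>c. P + monom c K) ` UNIV \<subseteq> F"
    proof
      fix s assume "s \<in> (\<lambda>c. P + monom c K) ` UNIV"
      then obtain c where seq: "s = P + monom c K" by blast
      have "s \<in> R_inv n \<alpha>" unfolding R_inv_iff[OF two] evp_def RL seq
        using evs0 K2 unfolding evp_def K_def by (auto simp: cP coeff_monom K_def)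
      moreover have "pr_alpha n \<alpha> s = P"
        unfolding poly_eq_iff coeff_pr K_def[symmetric] seq by (auto simp: cP coeff_monom)
      ultimately show "s \<in> F" unfolding F_def by simp
    qed
  qed
  have inj: "inj (\<lambda>c. P + monom c K)" by (rule injI) (simp add: monom_eq_iff)
  have card: "card F = CARD('a)" unfolding Fim using card_image[OF inj] by simp
  have Qiff: "s0 \<in> Q n \<alpha> \<longleftrightarrow> F \<subseteq> Q n \<alpha>"
  proof
    assume F: "F \<subseteq> Q n \<alpha>"
    have "s0 \<in> F" unfolding F_def P_def using s0R by simp
    thus "s0 \<in> Q n \<alpha>" using F by blast
  next
    assume s0Q: "s0 \<in> Q n \<alpha>"
    show "F \<subseteq> Q n \<alpha>"
    proof
      fix s assume "s \<in> F"
      hence sR: "s \<in> R_inv n \<alpha>" and ps: "pr_alpha n \<alpha> s = P" unfolding F_def by auto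
      have eqlow: "i < K \<Longrightarrow> coeff s i = coeff s0 i" for i
      proof -
        assume "i < K"
        have "coeff (pr_alpha n \<alpha> s) i = coeff P i" using ps by simp
        thus ?thesis using \<open>i < K\<close> unfolding coeff_pr K_def[symmetric] cP by simp
      qed
      have pr1: "pr_alpha n \<alpha> (1::'a poly) = 1" "pr_alpha n \<alpha> (-1::'a poly) = -1"
        using pr_const[of \<alpha> n 1] pr_const[of \<alpha> n "-1"] an unfolding pc1 by auto
      have s1: "s \<noteq> 1" "s \<noteq> -1" using ps pn pr1 unfolding P_def by auto
      have s01: "s0 \<noteq> 1" "s0 \<noteq> -1" using pn pr1 by auto
      have "(\<alpha> \<ge> n div 2 \<and> coeff s0 0 \<noteq> 1 \<and> coeff s0 0 \<noteq> -1 \<and> is_nz_square ((coeff s0 0)^2 - 1))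
               \<or> (\<exists>\<epsilon>\<in>{1, -1}. \<exists>j t. coeff s0 0 = \<epsilon>
                    \<and> (\<forall>i. 0 < i \<and> i < j \<longrightarrow> coeff s0 (2*i) = 0)
                    \<and> coeff s0 (2*j) = t \<and> t \<noteq> 0
                    \<and> 1 \<le> j \<and> n - (2*\<alpha>+1) \<le> j \<and> j \<le> n - \<alpha> - 1
                    \<and> is_nz_square (\<epsilon> * (-1)^j * 2 * t))"
        using char[OF two an' s0R s01] s0Q by blast
      moreover have c0: "coeff s 0 = coeff s0 0" using eqlow K2 by simp
      ultimately consider
          "\<alpha> \<ge> n div 2 \<and> coeff s0 0 \<noteq> 1 \<and> coeff s0 0 \<noteq> -1 \<and> is_nz_square ((coeff s0 0)^2 - 1)"
        | \<epsilon> j t where "\<epsilon>\<in>{1, -1}" "coeff s0 0 = \<epsilon>"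
                    "\<forall>i. 0 < i \<and> i < j \<longrightarrow> coeff s0 (2*i) = 0"
                    "coeff s0 (2*j) = t" "t \<noteq> 0"
                    "1 \<le> j" "n - (2*\<alpha>+1) \<le> j" "j \<le> n - \<alpha> - 1"
                    "is_nz_square (\<epsilon> * (-1)^j * 2 * t)" by blast
      thus "s \<in> Q n \<alpha>"
      proof cases
        case 1
        thus ?thesis unfolding char[OF two an' sR s1] c0 by blast
      next
        case (2 \<epsilon> j t)
        have "2*j < K"
        proof (rule ccontr)
          assume "\<not> 2*j < K"
          hence jK: "2*j = K" using 2(8) unfolding K_def by linarith
          have "P = [:\<epsilon>:]"
            unfolding poly_eq_iff
          proof
            fix i show "coeff P i = coeff [:\<epsilon>:] i"
            proof (cases "i < K")
              case False thus ?thesis using K2 by (simp add: cP coeff_const_eps)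
            next
              case True
              show ?thesis
              proof (cases "i = 0")
                case True thus ?thesis using 2(2) K2 by (simp add: cP coeff_const_eps)
              next
                case False
                show ?thesis
                proof (cases "even i")
                  case True
                  then obtain k where "i = 2*k" by blast
                  thus ?thesis using 2(3) False \<open>i < K\<close> jK by (auto simp: cP coeff_const_eps)
                next
                  case False thus ?thesis using evs0 unfolding evp_def by (auto simp: cP coeff_const_eps)
                qed
              qed
            qed
          qed
          thus False using pn 2(1) unfolding P_def pc1 by auto
        qed
        have "\<forall>i. 0 < i \<and> i < j \<longrightarrow> coeff s (2*i) = 0" using 2(3) eqlow \<open>2*j < K\<close> by auto
        moreover have "coeff s (2*j) = t" using 2(4) eqlow \<open>2*j < K\<close> by auto
        ultimately show ?thesis unfolding char[OF two an' sR s1] c0 using 2 by blast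
      qed
    qed
  qed
  show ?thesis using card Qiff unfolding F_def P_def by simp
qed

lemma part4:
  assumes two: "(2::'a::{finite,field}) \<noteq> 0" and n1: "n \<ge> 1"
  shows "card (Q n (n - 1) :: 'a poly set) = (CARD('a) - 3) div 2"
proof -
  have an: "n - 1 < n" using n1 by simp
  have RL: "R_len n (n-1) = 1" unfolding R_len_def using n1 by simp
  have "Q n (n-1) = (\<lambda>c::'a. [:c:]) ` {c. is_nz_square (c^2 - 1)}"
  proof
    show "Q n (n-1) \<subseteq> (\<lambda>c::'a. [:c:]) ` {c. is_nz_square (c^2 - 1)}"
    proof
      fix s :: "'a poly" assume sQ: "s \<in> Q n (n-1)"
      have sR: "s \<in> R_inv n (n-1)" using sQ Q_sub by blast
      have s1: "s \<noteq> 1" "s \<noteq> -1" using sQ unfolding Q_def by auto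
      have seq: "s = [:coeff s 0:]"
        unfolding poly_eq_iff using sR RL unfolding R_inv_def R_alpha_def
        by (auto simp: coeff_const_eps)
      have "is_nz_square ((coeff s 0)^2 - 1)"
        using char[OF two an sR s1] sQ by auto
      thus "s \<in> (\<lambda>c::'a. [:c:]) ` {c. is_nz_square (c^2 - 1)}" using seq by blast
    qed
  next
    show "(\<lambda>c::'a. [:c:]) ` {c. is_nz_square (c^2 - 1)} \<subseteq> Q n (n-1)"
    proof
      fix s assume "s \<in> (\<lambda>c::'a. [:c:]) ` {c. is_nz_square (c^2 - 1)}"
      then obtain c where c: "is_nz_square (c^2 - 1)" and seq: "s = [:c:]" by blast
      have c1: "c \<noteq> 1" "c \<noteq> -1" using c unfolding is_nz_square_def by auto
      have sR: "s \<in> R_inv n (n-1)" unfolding R_inv_iff[OF two] RL seq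
        by (auto simp: coeff_const_eps evp_const)
      have s1: "s \<noteq> 1" "s \<noteq> -1" using c1 unfolding seq pc1 by auto
      have "n div 2 \<le> n - 1" using n1 by simp
      thus "s \<in> Q n (n-1)" unfolding char[OF two an sR s1] using c c1 seq by simp
    qed
  qed
  moreover have "inj (\<lambda>c::'a. [:c:])" by (rule injI) simp
  ultimately show ?thesis using card_image card_conic[OF two] by (metis inj_on_subset subset_UNIV)
qed

theorem lemma4p15:
  fixes n :: nat and k :: "'a::{finite,field} itself"
  assumes "odd (CARD('a))" and "n \<ge> 1"
  shows "(\<forall>\<alpha><n. \<forall>s \<in> (R_inv n \<alpha> :: 'a poly set) - {1, -1}.
            s \<in> Q n \<alpha> \<longleftrightarrow>
              ((\<alpha> \<ge> n div 2 \<and> coeff s 0 \<noteq> 1 \<and> coeff s 0 \<noteq> -1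
                 \<and> is_nz_square ((coeff s 0)^2 - 1))
               \<or> (\<exists>\<epsilon>\<in>{1, -1}. \<exists>j s\<^sub>0. coeff s 0 = \<epsilon>
                    \<and> (\<forall>i. 0 < i \<and> i < j \<longrightarrow> coeff s (2*i) = 0)
                    \<and> coeff s (2*j) = s\<^sub>0 \<and> s\<^sub>0 \<noteq> 0
                    \<and> 1 \<le> j \<and> n - (2*\<alpha>+1) \<le> j \<and> j \<le> n - \<alpha> - 1
                    \<and> is_nz_square (\<epsilon> * (-1)^j * 2 * s\<^sub>0))))
       \<and> (\<forall>\<alpha>. \<alpha> + 2 \<le> n \<longrightarrow>
            card {s \<in> (Q n \<alpha> :: 'a poly set). pr_alpha n \<alpha> s = 1} = (CARD('a) - 1) div 2
          \<and> card {s \<in> (Q n \<alpha> :: 'a poly set). pr_alpha n \<alpha> s = -1} = (CARD('a) - 1) div 2)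
       \<and> (\<forall>\<alpha> (s\<^sub>0::'a poly). \<alpha> + 2 \<le> n \<and> s\<^sub>0 \<in> R_inv' n \<alpha> \<and> pr_alpha n \<alpha> s\<^sub>0 \<notin> {1, -1} \<longrightarrow>
            card {s \<in> R_inv n \<alpha>. pr_alpha n \<alpha> s = pr_alpha n \<alpha> s\<^sub>0} = CARD('a)
          \<and> (s\<^sub>0 \<in> Q n \<alpha> \<longleftrightarrow> {s \<in> R_inv n \<alpha>. pr_alpha n \<alpha> s = pr_alpha n \<alpha> s\<^sub>0} \<subseteq> Q n \<alpha>))
       \<and> card (Q n (n - 1) :: 'a poly set) = (CARD('a) - 3) div 2"
  proof -
  have two: "(2::'a) \<noteq> 0" using two_ne0 assms(1) by blast
  have P1: "\<forall>\<alpha><n. \<forall>s \<in> (R_inv n \<alpha> :: 'a poly set) - {1, -1}.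
            s \<in> Q n \<alpha> \<longleftrightarrow>
              ((\<alpha> \<ge> n div 2 \<and> coeff s 0 \<noteq> 1 \<and> coeff s 0 \<noteq> -1
                 \<and> is_nz_square ((coeff s 0)^2 - 1))
               \<or> (\<exists>\<epsilon>\<in>{1, -1}. \<exists>j s\<^sub>0. coeff s 0 = \<epsilon>
                    \<and> (\<forall>i. 0 < i \<and> i < j \<longrightarrow> coeff s (2*i) = 0)
                    \<and> coeff s (2*j) = s\<^sub>0 \<and> s\<^sub>0 \<noteq> 0
                    \<and> 1 \<le> j \<and> n - (2*\<alpha>+1) \<le> j \<and> j \<le> n - \<alpha> - 1
                    \<and> is_nz_square (\<epsilon> * (-1)^j * 2 * s\<^sub>0)))"
  proof (intro allI impI ballI)
    fix \<alpha> and s :: "'a poly"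
    assume "\<alpha> < n" "s \<in> R_inv n \<alpha> - {1, -1}"
    thus "s \<in> Q n \<alpha> \<longleftrightarrow>
              ((\<alpha> \<ge> n div 2 \<and> coeff s 0 \<noteq> 1 \<and> coeff s 0 \<noteq> -1
                 \<and> is_nz_square ((coeff s 0)^2 - 1))
               \<or> (\<exists>\<epsilon>\<in>{1, -1}. \<exists>j s\<^sub>0. coeff s 0 = \<epsilon>
                    \<and> (\<forall>i. 0 < i \<and> i < j \<longrightarrow> coeff s (2*i) = 0)
                    \<and> coeff s (2*j) = s\<^sub>0 \<and> s\<^sub>0 \<noteq> 0
                    \<and> 1 \<le> j \<and> n - (2*\<alpha>+1) \<le> j \<and> j \<le> n - \<alpha> - 1
                    \<and> is_nz_square (\<epsilon> * (-1)^j * 2 * s\<^sub>0)))"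
      by (intro char[OF two]) auto
  qed
  have P2: "\<forall>\<alpha>. \<alpha> + 2 \<le> n \<longrightarrow>
            card {s \<in> (Q n \<alpha> :: 'a poly set). pr_alpha n \<alpha> s = 1} = (CARD('a) - 1) div 2
          \<and> card {s \<in> (Q n \<alpha> :: 'a poly set). pr_alpha n \<alpha> s = -1} = (CARD('a) - 1) div 2"
  proof (intro allI impI)
    fix \<alpha> assume a: "\<alpha> + 2 \<le> n"
    have c1: "card {s \<in> (Q n \<alpha> :: 'a poly set). pr_alpha n \<alpha> s = [:1:]} = (CARD('a) - 1) div 2"
      by (rule part2_card[OF two a]) simp
    have c2: "card {s \<in> (Q n \<alpha> :: 'a poly set). pr_alpha n \<alpha> s = [:-1:]} = (CARD('a) - 1) div 2"
      by (rule part2_card[OF two a]) simp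
    show "card {s \<in> (Q n \<alpha> :: 'a poly set). pr_alpha n \<alpha> s = 1} = (CARD('a) - 1) div 2
          \<and> card {s \<in> (Q n \<alpha> :: 'a poly set). pr_alpha n \<alpha> s = -1} = (CARD('a) - 1) div 2"
      using c1 c2 by (simp only: pc1[symmetric])
  qed
  have P3: "\<forall>\<alpha> (s\<^sub>0::'a poly). \<alpha> + 2 \<le> n \<and> s\<^sub>0 \<in> R_inv' n \<alpha> \<and> pr_alpha n \<alpha> s\<^sub>0 \<notin> {1, -1} \<longrightarrow>
            card {s \<in> R_inv n \<alpha>. pr_alpha n \<alpha> s = pr_alpha n \<alpha> s\<^sub>0} = CARD('a)
          \<and> (s\<^sub>0 \<in> Q n \<alpha> \<longleftrightarrow> {s \<in> R_inv n \<alpha>. pr_alpha n \<alpha> s = pr_alpha n \<alpha> s\<^sub>0} \<subseteq> Q n \<alpha>)"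
    using part3[OF two] by blast
  have P4: "card (Q n (n - 1) :: 'a poly set) = (CARD('a) - 3) div 2"
    by (rule part4[OF two assms(2)])
  show ?thesis using P1 P2 P3 P4 by blast
qed

end
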